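(* Let $k>0$ be an integer and let $U_k$ be the random variable on $G(n,p)$ counting proper star $k$-separations. Then \[\mathbb E(U_k)\le n^2\binom{n-1}{k}(1-p)^{2k+1}\big(p+(1-p)^{k+1}\big)^{n-k-2}\] and \[\mathbb E(U_k)\le k\,n^2\binom{n-1}{k}(1-p)^{k+1}p^2\big(p+(1-p)^{k+1}\big)^{n-k-2}.\]
   Context: $G(n,p)$ is the Erdős–Rényi random graph on vertex set $V$, $|V|=n$, each edge independently present with probability $p$. For a graph $\Delta$ with vertex set $W$, a separation is $S\subset W$ with $S\ne\varnothing$, $S\ne W$ and no edges between $S$ and $W\setminus S$. $\mathrm{st}(a)$ is $a$ with its neighbours. A star separation of $\Gamma$ is a pair $(a,S)$ with $a\in V$, $S\subset V\setminus\mathrm{st}(a)$, such that $S$ is a separation of the full subgraph $\Gamma\setminus\mathrm{st}(a)$; it is a star $k$-separation if $|S|=k$, and proper if $S$ is not a separation of $\Gamma$. *)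

theory Defs
  imports Complex_Main
begin

text \<open>Simple graphs on a vertex set V are represented by their edge sets:
  sets of 2-element subsets of V.\<close>

definition all_edges :: "'a set \<Rightarrow> 'a set set" where
  "all_edges V = {e. e \<subseteq> V \<and> card e = 2}"

definition graphs_on :: "'a set \<Rightarrow> 'a set set set" where
  "graphs_on V = Pow (all_edges V)"

definition gnp_weight :: "'a set \<Rightarrow> real \<Rightarrow> 'a set set \<Rightarrow> real" where
  "gnp_weight V p E = p ^ card E * (1 - p) ^ (card (all_edges V) - card E)"

definition gnp_expectation :: "'a set \<Rightarrow> real \<Rightarrow> ('a set set \<Rightarrow> real) \<Rightarrow> real" where
  "gnp_expectation V p X = (\<Sum>E\<in>graphs_on V. gnp_weight V p E * X E)"

definition st :: "'a set \<Rightarrow> 'a set set \<Rightarrow> 'a \<Rightarrow> 'a set" where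
  "st V E a = insert a {b \<in> V. {a, b} \<in> E}"

definition is_separation :: "'a set set \<Rightarrow> 'a set \<Rightarrow> 'a set \<Rightarrow> bool" where
  "is_separation E W S \<longleftrightarrow> S \<subseteq> W \<and> S \<noteq> {} \<and> S \<noteq> W \<and>
     (\<forall>x\<in>S. \<forall>y\<in>W - S. {x, y} \<notin> E)"

definition is_star_separation :: "'a set \<Rightarrow> 'a set set \<Rightarrow> 'a \<Rightarrow> 'a set \<Rightarrow> bool" where
  "is_star_separation V E a S \<longleftrightarrow> a \<in> V \<and> S \<subseteq> V - st V E a \<and>
     is_separation E (V - st V E a) S"

definition is_proper_star_k_separation ::
    "'a set \<Rightarrow> 'a set set \<Rightarrow> nat \<Rightarrow> 'a \<Rightarrow> 'a set \<Rightarrow> bool" where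
  "is_proper_star_k_separation V E k a S \<longleftrightarrow>
     is_star_separation V E a S \<and> card S = k \<and> \<not> is_separation E V S"

definition U :: "'a set \<Rightarrow> nat \<Rightarrow> 'a set set \<Rightarrow> nat" where
  "U V k E = card {(a, S). is_proper_star_k_separation V E k a S}"

end

theory Submission
  imports Defs
begin


lemma K_lemma:
  fixes p q :: real
  assumes p0: "0 \<le> p" and p1: "p \<le> 1" and qd: "q = 1 - p" and qp: "q > p^2"
  shows "(\<Sum>j<m. (q / (1 - p*q))^j) \<le> (real m + 2) * q"
proof (induction m)
  case 0 then show ?case using qd p1 by simp
next
  case (Suc m)
  define x where "x = q / (1 - p*q)"
  have pq4: "p*q \<le> 1/4"
  proof -
    have "p*q = 1/4 - (p-1/2)^2" by (simp add: qd power2_eq_square algebra_simps)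
    then show ?thesis using zero_le_power2[of "p-1/2"] by linarith
  qed
  have dpos: "1 - p*q > 0" using pq4 by linarith
  have q0: "q \<ge> 0" using qd p1 by simp
  have x0: "x \<ge> 0" unfolding x_def using dpos q0 by simp
  have x1: "x \<le> 1"
  proof -
    have "p*q \<le> p" using p0 p1 qd by (simp add: mult_left_le)
    then have "q \<le> 1 - p*q" using qd by simp
    then show ?thesis unfolding x_def using dpos by simp
  qed
  have IH: "(\<Sum>j<m. x^j) \<le> (real m + 2) * q" using Suc x_def by simp
  have shift: "(\<Sum>j<Suc m. x^j) = 1 + x * (\<Sum>j<m. x^j)"
    by (subst sum.lessThan_Suc_shift) (simp add: sum_distrib_left del: sum.lessThan_Suc)
  have bnd: "(\<Sum>j<Suc m. x^j) \<le> real (Suc m)"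
  proof -
    have "(\<Sum>j<Suc m. x^j) \<le> (\<Sum>j<Suc m. (1::real))"
      by (rule sum_mono) (simp add: power_le_one x0 x1)
    then show ?thesis by simp
  qed
  have main: "(\<Sum>j<Suc m. x^j) \<le> (real (Suc m) + 2) * q"
  proof (cases "(real m + 3) * p * q \<ge> 1")
    case True
    have "x * (\<Sum>j<m. x^j) \<le> x * ((real m + 2) * q)"
      using IH x0 by (rule mult_left_mono)
    moreover have "1 + x * ((real m + 2) * q) \<le> (real m + 3) * q"
    proof -
      have e: "x * ((real m + 2) * q) = ((real m + 2) * q * q) / (1 - p*q)"
        unfolding x_def by simp
      have "1 - p*q + (real m + 2) * q * q \<le> (real m + 3) * q * (1 - p*q)"
      proof -
        have "(real m + 3) * q * (1 - p*q) - (1 - p*q + (real m + 2) * q * q)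
              = p * ((real m + 3) * p * q - 1)"
          by (simp add: qd algebra_simps)
        moreover have "p * ((real m + 3) * p * q - 1) \<ge> 0" using True p0 by simp
        ultimately show ?thesis by linarith
      qed
      then have "(real m + 2) * q * q \<le> ((real m + 3) * q - 1) * (1 - p*q)"
        by (simp add: algebra_simps)
      then have "((real m + 2) * q * q) / (1 - p*q) \<le> (real m + 3) * q - 1"
        by (simp add: pos_divide_le_eq[OF dpos])
      then show ?thesis using e by linarith
    qed
    ultimately show ?thesis using shift by (simp add: algebra_simps)
  next
    case False
    show ?thesis
    proof (cases "q \<ge> 1/2")
      case True
      have "(real m + 3) * p \<le> 2"
      proof -
        have "(real m + 3) * p * (1/2) \<le> (real m + 3) * p * q"
          using True p0 by (intro mult_left_mono) auto
        then show ?thesis using False by linarith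
      qed
      then have "real (Suc m) \<le> (real (Suc m) + 2) * q" by (simp add: qd algebra_simps)
      then show ?thesis using bnd by linarith
    next
      case qlt: False
      have p12: "p \<ge> 1/2" using qlt qd by simp
      have qge: "q \<ge> 19/50"
      proof (rule ccontr)
        assume "\<not> q \<ge> 19/50"
        then have "p \<ge> 31/50" using qd by simp
        then have "p^2 \<ge> (31/50)^2" by (rule power_mono) simp
        then show False using qp \<open>\<not> q \<ge> 19/50\<close> by (simp add: power2_eq_square)
      qed
      have pq5: "p * q \<ge> 1/5"
      proof -
        have "(q - 19/50) * (31/50 - q) \<ge> 0" using qge qlt by (intro mult_nonneg_nonneg) auto
        moreover have "p*q = (q - 19/50) * (31/50 - q) + 589/2500" by (simp add: qd algebra_simps)
        ultimately show ?thesis by linarith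
      qed
      have "m \<le> 1"
      proof (rule ccontr)
        assume "\<not> m \<le> 1"
        then have "real m \<ge> 2" by simp
        then have "(real m + 3) * (p*q) \<ge> 5 * (1/5)" using pq5
          by (intro mult_mono) auto
        then show False using False by (simp add: algebra_simps)
      qed
      then consider "m = 0" | "m = 1" by linarith
      then show ?thesis
      proof cases
        case 1 then show ?thesis using qge by simp
      next
        case 2
        have "1 + x \<le> 4 * q"
        proof -
          have "1 - p*q + q \<le> 4 * q * (1 - p*q)"
          proof -
            have g: "4*q^2 - 87/25*q + 3347/1250 \<ge> 0" using qlt qge
            proof -
              have h: "q*q \<ge> 0" by simp
              show ?thesis using h qlt unfolding power2_eq_square by linarith
            qed
            have "(q - 19/50) * (4*q^2 - 87/25*q + 3347/1250) \<ge> 0" using qge g by simp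
            moreover have "4 * q * (1 - p*q) - (1 - p*q + q) = (q - 19/50) * (4*q^2 - 87/25*q + 3347/1250) + 1093/62500"
              unfolding qd power2_eq_square by (simp add: field_simps)
            ultimately show ?thesis by linarith
          qed
          then have "q \<le> (4*q - 1) * (1 - p*q)" by (simp add: algebra_simps)
          then have "q / (1 - p*q) \<le> 4*q - 1" by (simp add: pos_divide_le_eq[OF dpos])
          then show ?thesis unfolding x_def by linarith
        qed
        then show ?thesis using 2 by (simp add: numeral_eq_Suc)
      qed
    qed
  qed
  then show ?case unfolding x_def .
qed

lemma qk_le:
  fixes q :: real
  assumes "0 \<le> q" "q \<le> 1" "k \<ge> 1"
  shows "q^k \<le> q"
  using power_decreasing[of 1 k q] assms by simp

lemma LB1:
  fixes p q r :: real
  assumes p0: "0 \<le> p" and p1: "p \<le> 1" and qd: "q = 1 - p" and rd: "r = p + q^(k+1)"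
  shows "r^m - p^m \<le> real m * q^(k+1) * r^(m-1)"
proof -
  have q0: "q \<ge> 0" using qd p1 by simp
  have pr: "p \<le> r" using rd q0 by simp
  have "r^m - p^m = (r - p) * (\<Sum>i<m. p^(m - Suc i) * r^i)" by (rule power_diff_sumr2)
  also have "(\<Sum>i<m. p^(m - Suc i) * r^i) \<le> (\<Sum>i<m. r^(m-1))"
  proof (rule sum_mono)
    fix i assume "i \<in> {..<m}"
    then have i: "i < m" by simp
    have "p^(m - Suc i) * r^i \<le> r^(m - Suc i) * r^i"
      using p0 pr by (intro mult_right_mono power_mono) auto
    also have "\<dots> = r^(m-1)" using i by (simp add: power_add[symmetric])
    finally show "p^(m - Suc i) * r^i \<le> r^(m-1)" .
  qed
  then have "(r - p) * (\<Sum>i<m. p^(m - Suc i) * r^i) \<le> (r - p) * (\<Sum>i<m. r^(m-1))"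
    using pr by (intro mult_left_mono) auto
  finally show ?thesis using rd by (simp add: algebra_simps)
qed

lemma LB2a:
  fixes p q r :: real
  assumes p0: "0 \<le> p" and p1: "p \<le> 1" and qd: "q = 1 - p" and rd: "r = p + q^(k+1)"
    and k: "k \<ge> 1" and qp: "q \<le> p^2"
  shows "q^k * (r^m - p^m) \<le> real k * (real m + real k + 1) * p^2 * q^(k+1) * r^(m-1)"
proof -
  have q0: "q \<ge> 0" using qd p1 by simp
  have q1: "q \<le> 1" using qd p0 by simp
  have r0: "r \<ge> 0" using rd q0 p0 by simp
  have "q^k * (r^m - p^m) \<le> q^k * (real m * q^(k+1) * r^(m-1))"
    using LB1[OF p0 p1 qd rd] q0 by (intro mult_left_mono) auto
  also have "\<dots> = (q^k * real m) * (q^(k+1) * r^(m-1))" by (simp add: algebra_simps)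
  also have "\<dots> \<le> (p^2 * (real k * (real m + real k + 1))) * (q^(k+1) * r^(m-1))"
  proof (rule mult_right_mono)
    have "q^k \<le> q" using q0 q1 k by (rule qk_le)
    then have "q^k \<le> p^2" using qp by simp
    moreover have "real m \<le> real k * (real m + real k + 1)"
    proof -
      have "real m \<le> 1 * (real m + real k + 1)" by simp
      also have "\<dots> \<le> real k * (real m + real k + 1)" using k by (intro mult_right_mono) auto
      finally show ?thesis .
    qed
    ultimately show "q^k * real m \<le> p^2 * (real k * (real m + real k + 1))"
      using q0 by (intro mult_mono) auto
    show "0 \<le> q^(k+1) * r^(m-1)" using q0 r0 by simp
  qed
  finally show ?thesis by (simp add: algebra_simps)
qed

lemma LB2b:
  fixes p q r :: real
  assumes p0: "0 \<le> p" and p1: "p \<le> 1" and qd: "q = 1 - p" and rd: "r = p + q^(k+1)"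
    and k: "k \<ge> 1" and qp: "q > p^2"
  shows "q^k * (r^m - (q^k)^m) \<le> real k * (real m + real k + 1) * p^2 * q^(k+1) * r^(m-1)"
proof -
  have q0: "q \<ge> 0" using qd p1 by simp
  have q1: "q \<le> 1" using qd p0 by simp
  have r0: "r \<ge> 0" using rd q0 p0 by simp
  define x where "x = q / (1 - p*q)"
  have dpq: "1 - p*q = p + q^2" by (simp add: qd power2_eq_square algebra_simps)
  have dpos: "p + q^2 > 0" using qp p0 by (cases "p = 0") (auto simp: qd intro: add_pos_nonneg)
  have x0: "x \<ge> 0" unfolding x_def dpq using q0 dpos by simp
  have qkr: "q^k \<le> r * x"
  proof -
    have "q^k * p \<le> q * p" using qk_le[OF q0 q1 k] p0
      by (intro mult_right_mono) simp_all
    then have "q^k * (p + q^2) \<le> q * (p + q^(k+1))"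
      by (simp add: algebra_simps power2_eq_square)
    then have "q^k \<le> q * (p + q^(k+1)) / (p + q^2)" using dpos by (simp add: pos_le_divide_eq)
    then show ?thesis unfolding x_def dpq rd by (simp add: mult.commute)
  qed
  have tk: "r - q^k \<le> real k * p^2"
  proof -
    have "1 + real k * (-p) \<le> (1 + (-p))^k" by (rule Bernoulli_inequality) (use p1 in simp)
    then have "1 - q^k \<le> real k * p" using qd by simp
    then have "p * (1 - q^k) \<le> p * (real k * p)" using p0 by (intro mult_left_mono) auto
    moreover have "r - q^k = p * (1 - q^k)" by (simp add: rd qd algebra_simps)
    ultimately show ?thesis by (simp add: power2_eq_square algebra_simps)
  qed
  have tk0: "r - q^k \<ge> 0"
  proof -
    have "q^k \<le> 1" using q0 q1 by (simp add: power_le_one)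
    then show ?thesis by (simp add: rd qd algebra_simps mult_left_le p0)
  qed
  have "r^m - (q^k)^m = (r - q^k) * (\<Sum>i<m. (q^k)^(m - Suc i) * r^i)" by (rule power_diff_sumr2)
  also have "(\<Sum>i<m. (q^k)^(m - Suc i) * r^i) \<le> (\<Sum>i<m. x^(m - Suc i) * r^(m-1))"
  proof (rule sum_mono)
    fix i assume "i \<in> {..<m}"
    then have i: "i < m" by simp
    have "(q^k)^(m - Suc i) * r^i \<le> (r*x)^(m - Suc i) * r^i"
      using qkr q0 r0 by (intro mult_right_mono power_mono) auto
    also have "\<dots> = x^(m - Suc i) * r^(m - Suc i + i)" by (simp add: power_mult_distrib power_add)
    also have "m - Suc i + i = m - 1" using i by simp
    finally show "(q^k)^(m - Suc i) * r^i \<le> x^(m - Suc i) * r^(m-1)" by simp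
  qed
  also have "(\<Sum>i<m. x^(m - Suc i) * r^(m-1)) = (\<Sum>i<m. x^i * r^(m-1))"
    by (rule sum.nat_diff_reindex[of "\<lambda>i. x^i * r^(m-1)"])
  also have "\<dots> = (\<Sum>i<m. x^i) * r^(m-1)"
    by (simp add: sum_distrib_right)
  also have "\<dots> \<le> ((real m + 2) * q) * r^(m-1)"
    using K_lemma[OF p0 p1 qd qp, of m] r0 unfolding x_def by (intro mult_right_mono) auto
  finally have A: "r^m - (q^k)^m \<le> (r - q^k) * (((real m + 2) * q) * r^(m-1))"
    using tk0 by (simp add: mult_left_mono)
  also have "\<dots> \<le> (real k * p^2) * (((real m + real k + 1) * q) * r^(m-1))"
    using tk tk0 k q0 r0 by (intro mult_mono mult_right_mono) auto
  finally have "r^m - (q^k)^m \<le> (real k * p^2) * (((real m + real k + 1) * q) * r^(m-1))" .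
  then have "q^k * (r^m - (q^k)^m) \<le> q^k * ((real k * p^2) * (((real m + real k + 1) * q) * r^(m-1)))"
    using q0 by (intro mult_left_mono) auto
  then show ?thesis by (simp add: algebra_simps)
qed



definition wt :: "'b set \<Rightarrow> real \<Rightarrow> 'b set \<Rightarrow> real" where
  "wt Y p E = p ^ card E * (1 - p) ^ (card Y - card E)"

definition ind :: "bool \<Rightarrow> real" where "ind P = (if P then 1 else 0)"

lemma wt_sum1:
  assumes "finite Y" shows "(\<Sum>E\<in>Pow Y. wt Y p E) = 1"
proof -
  have "(\<Prod>x\<in>Y. p + (1-p)) = (\<Sum>X\<in>Pow Y. (\<Prod>x\<in>X. p) * (\<Prod>x\<in>Y-X. 1-p))"
    by (rule prod_add[OF assms])
  moreover have "(\<Prod>x\<in>Y. p + (1-p)) = 1" by simp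
  moreover have "(\<Sum>X\<in>Pow Y. (\<Prod>x\<in>X. p) * (\<Prod>x\<in>Y-X. 1-p)) = (\<Sum>E\<in>Pow Y. wt Y p E)"
  proof (rule sum.cong[OF refl])
    fix X assume "X \<in> Pow Y"
    then have "X \<subseteq> Y" by simp
    then have "card (Y - X) = card Y - card X" using assms by (simp add: card_Diff_subset finite_subset)
    then show "(\<Prod>x\<in>X. p) * (\<Prod>x\<in>Y-X. 1-p) = wt Y p X" by (simp add: wt_def)
  qed
  ultimately show ?thesis by simp
qed

lemma sum_Pow_split:
  assumes "finite Y" "A \<subseteq> Y"
  shows "(\<Sum>E\<in>Pow Y. g E) = (\<Sum>B\<in>Pow A. \<Sum>D\<in>Pow (Y - A). g (B \<union> D))"
proof -
  have inj: "inj_on (\<lambda>(B,D). B \<union> D) (Pow A \<times> Pow (Y - A))"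
  proof (rule inj_onI)
    fix x y assume x: "x \<in> Pow A \<times> Pow (Y - A)" and y: "y \<in> Pow A \<times> Pow (Y - A)"
      and e: "(\<lambda>(B,D). B \<union> D) x = (\<lambda>(B,D). B \<union> D) y"
    obtain B D where xd: "x = (B, D)" by (cases x)
    obtain B' D' where yd: "y = (B', D')" by (cases y)
    have "B = (B \<union> D) \<inter> A" "D = (B \<union> D) - A" using x xd by auto
    moreover have "B' = (B' \<union> D') \<inter> A" "D' = (B' \<union> D') - A" using y yd by auto
    ultimately show "x = y" using e xd yd by auto
  qed
  have img: "(\<lambda>(B,D). B \<union> D) ` (Pow A \<times> Pow (Y - A)) = Pow Y"
  proof
    show "(\<lambda>(B,D). B \<union> D) ` (Pow A \<times> Pow (Y - A)) \<subseteq> Pow Y" using assms(2) by auto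
    show "Pow Y \<subseteq> (\<lambda>(B,D). B \<union> D) ` (Pow A \<times> Pow (Y - A))"
    proof
      fix E assume "E \<in> Pow Y"
      then have "E = (\<lambda>(B,D). B \<union> D) (E \<inter> A, E - A)" "(E \<inter> A, E - A) \<in> Pow A \<times> Pow (Y - A)" by auto
      then show "E \<in> (\<lambda>(B,D). B \<union> D) ` (Pow A \<times> Pow (Y - A))" by (rule image_eqI)
    qed
  qed
  have "(\<Sum>E\<in>Pow Y. g E) = (\<Sum>x\<in>Pow A \<times> Pow (Y-A). g ((\<lambda>(B,D). B \<union> D) x))"
    by (subst img[symmetric], subst sum.reindex[OF inj]) (simp add: comp_def)
  also have "\<dots> = (\<Sum>B\<in>Pow A. \<Sum>D\<in>Pow (Y - A). g (B \<union> D))"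
    by (simp add: sum.cartesian_product split_def)
  finally show ?thesis .
qed

lemma wt_mult:
  assumes Y: "finite Y" and AU: "A \<subseteq> Y" and B: "B \<subseteq> A" and D: "D \<subseteq> Y - A"
  shows "wt Y p (B \<union> D) = wt A p B * wt (Y - A) p D"
proof -
  have fA: "finite A" using Y AU finite_subset by blast
  have fUA: "finite (Y - A)" using Y by simp
  have fB: "finite B" using fA B finite_subset by blast
  have fD: "finite D" using fUA D finite_subset by blast
  have c1: "card (B \<union> D) = card B + card D" using fB fD B D by (intro card_Un_disjoint) auto
  have c2: "card Y = card A + card (Y - A)" using Y AU fA by (simp add: card_Diff_subset card_mono)
  have c3: "card B \<le> card A" using fA B card_mono by blast
  have c4: "card D \<le> card (Y - A)" using fUA D card_mono by blast
  have "card Y - card (B \<union> D) = (card A - card B) + (card (Y - A) - card D)"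
    using c1 c2 c3 c4 by simp
  then show ?thesis unfolding wt_def c1 by (simp add: power_add algebra_simps)
qed

lemma factor2:
  assumes Y: "finite Y" and AU: "A \<subseteq> Y"
  shows "(\<Sum>E\<in>Pow Y. wt Y p E * f (E \<inter> A) * g (E - A))
       = (\<Sum>B\<in>Pow A. wt A p B * f B) * (\<Sum>D\<in>Pow (Y - A). wt (Y - A) p D * g D)"
proof -
  have "(\<Sum>E\<in>Pow Y. wt Y p E * f (E \<inter> A) * g (E - A))
      = (\<Sum>B\<in>Pow A. \<Sum>D\<in>Pow (Y - A). wt Y p (B \<union> D) * f ((B \<union> D) \<inter> A) * g ((B \<union> D) - A))"
    by (rule sum_Pow_split[OF Y AU])
  also have "\<dots> = (\<Sum>B\<in>Pow A. \<Sum>D\<in>Pow (Y - A). (wt A p B * f B) * (wt (Y - A) p D * g D))"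
  proof (intro sum.cong refl)
    fix B D assume B: "B \<in> Pow A" and D: "D \<in> Pow (Y - A)"
    have "(B \<union> D) \<inter> A = B" "(B \<union> D) - A = D" using B D by auto
    then show "wt Y p (B \<union> D) * f ((B \<union> D) \<inter> A) * g ((B \<union> D) - A) = (wt A p B * f B) * (wt (Y - A) p D * g D)"
      using wt_mult[OF Y AU, of B D p] B D by simp
  qed
  also have "\<dots> = (\<Sum>B\<in>Pow A. wt A p B * f B) * (\<Sum>D\<in>Pow (Y - A). wt (Y - A) p D * g D)"
    by (simp add: sum_product)
  finally show ?thesis .
qed

lemma factorI:
  assumes "finite I"
  shows "finite Y \<Longrightarrow> (\<forall>i\<in>I. A i \<subseteq> Y) \<Longrightarrow> (\<forall>i\<in>I. \<forall>j\<in>I. i \<noteq> j \<longrightarrow> A i \<inter> A j = {}) \<Longrightarrow>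
    (\<Sum>E\<in>Pow Y. wt Y p E * (\<Prod>i\<in>I. f i (E \<inter> A i))) = (\<Prod>i\<in>I. \<Sum>B\<in>Pow (A i). wt (A i) p B * f i B)"
  using assms
proof (induction I arbitrary: Y rule: finite_induct)
  case empty
  then show ?case using wt_sum1 by simp
next
  case (insert i J)
  have AU: "A i \<subseteq> Y" using insert by simp
  have disjJ: "\<forall>i\<in>J. \<forall>j\<in>J. i \<noteq> j \<longrightarrow> A i \<inter> A j = {}" using insert.prems(3) by auto
  have dij: "\<And>j. j \<in> J \<Longrightarrow> A i \<inter> A j = {}"
    using insert.prems(3) insert.hyps(2) by (metis insertCI)
  have "(\<Sum>E\<in>Pow Y. wt Y p E * (\<Prod>j\<in>insert i J. f j (E \<inter> A j)))
      = (\<Sum>E\<in>Pow Y. wt Y p E * f i (E \<inter> A i) * (\<lambda>D. \<Prod>j\<in>J. f j (D \<inter> A j)) (E - A i))"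
  proof (rule sum.cong[OF refl])
    fix E assume "E \<in> Pow Y"
    have "(\<Prod>j\<in>J. f j (E \<inter> A j)) = (\<Prod>j\<in>J. f j ((E - A i) \<inter> A j))"
    proof (rule prod.cong[OF refl])
      fix j assume "j \<in> J"
      then have "E \<inter> A j = (E - A i) \<inter> A j" using dij by auto
      then show "f j (E \<inter> A j) = f j ((E - A i) \<inter> A j)" by simp
    qed
    then show "wt Y p E * (\<Prod>j\<in>insert i J. f j (E \<inter> A j))
      = wt Y p E * f i (E \<inter> A i) * (\<lambda>D. \<Prod>j\<in>J. f j (D \<inter> A j)) (E - A i)"
      using insert.hyps by (simp add: algebra_simps)
  qed
  also have "\<dots> = (\<Sum>B\<in>Pow (A i). wt (A i) p B * f i B) *
       (\<Sum>D\<in>Pow (Y - A i). wt (Y - A i) p D * (\<Prod>j\<in>J. f j (D \<inter> A j)))"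
    by (rule factor2[OF insert.prems(1) AU])
  also have "(\<Sum>D\<in>Pow (Y - A i). wt (Y - A i) p D * (\<Prod>j\<in>J. f j (D \<inter> A j)))
      = (\<Prod>j\<in>J. \<Sum>B\<in>Pow (A j). wt (A j) p B * f j B)"
  proof (rule insert.IH)
    show "finite (Y - A i)" using insert.prems by simp
    show "\<forall>j\<in>J. A j \<subseteq> Y - A i" using insert.prems(2) dij by auto
    show "\<forall>i\<in>J. \<forall>j\<in>J. i \<noteq> j \<longrightarrow> A i \<inter> A j = {}" by (rule disjJ)
  qed
  finally show ?case using insert.hyps by simp
qed

lemma prod_ind: "finite I \<Longrightarrow> (\<Prod>x\<in>I. ind (P x)) = ind (\<forall>x\<in>I. P x)"
  by (induction I rule: finite_induct) (auto simp: ind_def)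

lemma ind_disj: "\<not> (P \<and> Q) \<Longrightarrow> ind (P \<or> Q) = ind P + ind Q"
  by (auto simp: ind_def)

lemma mu_empty:
  assumes "finite A"
  shows "(\<Sum>B\<in>Pow A. wt A p B * ind (B = {})) = (1-p)^card A"
proof -
  have "(\<Sum>B\<in>Pow A. wt A p B * ind (B = {})) = (\<Sum>B\<in>Pow A. if B = {} then wt A p B else 0)"
    by (intro sum.cong) (auto simp: ind_def)
  also have "\<dots> = wt A p {}" using assms by (simp add: sum.delta')
  finally show ?thesis by (simp add: wt_def)
qed

lemma mu_single:
  assumes "finite A" "e \<in> A"
  shows "(\<Sum>B\<in>Pow A. wt A p B * ind (B = {e})) = p * (1-p)^(card A - 1)"
proof -
  have "(\<Sum>B\<in>Pow A. wt A p B * ind (B = {e})) = (\<Sum>B\<in>Pow A. if B = {e} then wt A p B else 0)"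
    by (intro sum.cong) (auto simp: ind_def)
  also have "\<dots> = wt A p {e}" using assms by (simp add: sum.delta')
  finally show ?thesis by (simp add: wt_def)
qed

lemma mu_mem:
  assumes Y: "finite A" and e: "e \<in> A"
  shows "(\<Sum>B\<in>Pow A. wt A p B * ind (e \<in> B)) = p"
proof -
  have eA: "{e} \<subseteq> A" using e by simp
  have "(\<Sum>B\<in>Pow A. wt A p B * ind (e \<in> B)) = (\<Sum>B\<in>Pow A. wt A p B * (\<lambda>B. ind (e \<in> B)) (B \<inter> {e}) * (\<lambda>_. 1) (B - {e}))"
    by (intro sum.cong) auto
  also have "\<dots> = (\<Sum>B\<in>Pow {e}. wt {e} p B * ind (e \<in> B)) * (\<Sum>D\<in>Pow (A - {e}). wt (A - {e}) p D * 1)"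
    by (rule factor2[OF Y eA])
  also have "(\<Sum>D\<in>Pow (A - {e}). wt (A - {e}) p D * 1) = 1" using wt_sum1[of "A - {e}" p] Y by simp
  also have "(\<Sum>B\<in>Pow {e}. wt {e} p B * ind (e \<in> B)) = p"
  proof -
    have "Pow {e} = {{}, {e}}" by blast
    then show ?thesis by (simp add: ind_def wt_def)
  qed
  finally show ?thesis by simp
qed



definition Af :: "'a \<Rightarrow> 'a set \<Rightarrow> 'a \<Rightarrow> 'a set set" where
  "Af a S x = (if x = a then (\<lambda>s. {a,s}) ` S else insert {x,a} ((\<lambda>s. {x,s}) ` S))"

definition PAB :: "'a \<Rightarrow> 'a \<Rightarrow> 'a set set \<Rightarrow> bool" where
  "PAB a x B = (if x = a then B = {} else ({x,a} \<in> B \<or> B = {}))"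
definition PN :: "'a \<Rightarrow> 'a \<Rightarrow> 'a set set \<Rightarrow> bool" where
  "PN a x B = (if x = a then B = {} else (B = {} \<or> B = {{x,a}}))"
definition PA :: "'a \<Rightarrow> 'a \<Rightarrow> 'a set set \<Rightarrow> bool" where
  "PA a x B = (if x = a then B = {} else {x,a} \<in> B)"

lemma proper_PAB:
  assumes P: "is_proper_star_k_separation V E k a S" and x: "x \<in> insert a (V - insert a S)"
  shows "PAB a x (E \<inter> Af a S x)"
proof -
  from P have aV: "a \<in> V" and Sst: "S \<subseteq> V - st V E a"
    and sep: "\<forall>y\<in>S. \<forall>z\<in>(V - st V E a) - S. {y, z} \<notin> E"
    unfolding is_proper_star_k_separation_def is_star_separation_def is_separation_def by auto
  have nS: "\<And>s. s \<in> S \<Longrightarrow> {a,s} \<notin> E" using Sst unfolding st_def by auto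
  show ?thesis
  proof (cases "x = a")
    case True
    then show ?thesis using nS unfolding PAB_def Af_def by auto
  next
    case False
    then have xV: "x \<in> V" and xS: "x \<notin> S" using x by auto
    show ?thesis
    proof (cases "{x,a} \<in> E")
      case True
      then show ?thesis using False unfolding PAB_def Af_def by auto
    next
      case nE: False
      then have "{a,x} \<notin> E" by (simp add: insert_commute)
      then have "x \<in> (V - st V E a) - S" using xV xS False unfolding st_def by auto
      then have "\<And>s. s \<in> S \<Longrightarrow> {x,s} \<notin> E" using sep by (metis insert_commute)
      then show ?thesis using False nE unfolding PAB_def Af_def by auto
    qed
  qed
qed

lemma proper_not_PN:
  assumes P: "is_proper_star_k_separation V E k a S"
  shows "\<not> (\<forall>x\<in>insert a (V - insert a S). PN a x (E \<inter> Af a S x))"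
proof -
  from P have aV: "a \<in> V" and Sst: "S \<subseteq> V - st V E a"
    and ns: "\<not> is_separation E V S" and kS: "S \<noteq> {}"
    unfolding is_proper_star_k_separation_def is_star_separation_def is_separation_def by auto
  have nS: "\<And>s. s \<in> S \<Longrightarrow> {a,s} \<notin> E" and aS: "a \<notin> S" using Sst unfolding st_def by auto
  have "S \<subseteq> V" "S \<noteq> V" using Sst aV aS by auto
  then obtain y z where y: "y \<in> S" and z: "z \<in> V - S" and e: "{y,z} \<in> E"
    using ns kS unfolding is_separation_def by auto
  have za: "z \<noteq> a" using nS y e by (auto simp: insert_commute)
  have ya: "y \<noteq> a" using y aS by auto
  have zI: "z \<in> insert a (V - insert a S)" using z za by auto
  have m: "{z,y} \<in> E \<inter> Af a S z" using e y za unfolding Af_def by (auto simp: insert_commute)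
  have neq: "{z,y} \<noteq> {z,a}" using ya by (auto simp: doubleton_eq_iff)
  have n1: "E \<inter> Af a S z \<noteq> {}" using m by blast
  have n2: "E \<inter> Af a S z \<noteq> {{z,a}}"
  proof
    assume "E \<inter> Af a S z = {{z,a}}"
    with m have "{z,y} \<in> {{z,a}}" by simp
    then show False using neq by simp
  qed
  have "\<not> PN a z (E \<inter> Af a S z)" using za n1 n2 unfolding PN_def by simp
  then show ?thesis using zI by blast
qed

lemma proper_not_PA:
  assumes P: "is_proper_star_k_separation V E k a S"
  shows "\<not> (\<forall>x\<in>insert a (V - insert a S). PA a x (E \<inter> Af a S x))"
proof -
  from P have aV: "a \<in> V" and Sst: "S \<subseteq> V - st V E a"
    and ne: "S \<noteq> V - st V E a"
    unfolding is_proper_star_k_separation_def is_star_separation_def is_separation_def by auto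
  then obtain w where w: "w \<in> (V - st V E a) - S" by blast
  then have wa: "w \<noteq> a" and wV: "w \<in> V" and wE: "{a,w} \<notin> E" and wS: "w \<notin> S"
    unfolding st_def by auto
  have wI: "w \<in> insert a (V - insert a S)" using wa wV wS by auto
  have "\<not> PA a w (E \<inter> Af a S w)" using wa wE unfolding PA_def by (auto simp: insert_commute)
  then show ?thesis using wI by blast
qed

lemma all_edges_finite: "finite V \<Longrightarrow> finite (all_edges V)"
  unfolding all_edges_def by (rule finite_subset[of _ "Pow V"]) auto

lemma ind_le_diff: "(P \<Longrightarrow> Q1 \<and> \<not> Q2) \<Longrightarrow> (Q2 \<Longrightarrow> Q1) \<Longrightarrow> ind P \<le> ind Q1 - ind Q2"
  by (auto simp: ind_def)

lemma Af_facts: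
  assumes fin: "finite V" and aV: "a \<in> V" and SV: "S \<subseteq> V - {a}" and cS: "card S = k"
  shows "\<forall>x\<in>insert a (V - insert a S). Af a S x \<subseteq> all_edges V"
    and "\<forall>x\<in>insert a (V - insert a S). \<forall>y\<in>insert a (V - insert a S). x \<noteq> y \<longrightarrow> Af a S x \<inter> Af a S y = {}"
    and "card (Af a S a) = k"
    and "\<And>x. x \<in> V - insert a S \<Longrightarrow> card (Af a S x) = k + 1"
    and "\<And>x. x \<in> V - insert a S \<Longrightarrow> {x,a} \<in> Af a S x"
    and "\<And>x. finite (Af a S x)"
proof -
  have fS: "finite S" using fin SV finite_subset by blast
  have aS: "a \<notin> S" using SV by auto
  show "\<forall>x\<in>insert a (V - insert a S). Af a S x \<subseteq> all_edges V"
    using SV aV unfolding Af_def all_edges_def by (auto simp: card_insert_if)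
  show "\<forall>x\<in>insert a (V - insert a S). \<forall>y\<in>insert a (V - insert a S). x \<noteq> y \<longrightarrow> Af a S x \<inter> Af a S y = {}"
    using aS unfolding Af_def by (auto simp: doubleton_eq_iff)
  have inj1: "inj_on (\<lambda>s. {a,s}) S" by (auto simp: inj_on_def doubleton_eq_iff)
  show "card (Af a S a) = k" unfolding Af_def using card_image[OF inj1] cS by simp
  fix x assume x: "x \<in> V - insert a S"
  have inj2: "inj_on (\<lambda>s. {x,s}) S" by (auto simp: inj_on_def doubleton_eq_iff)
  have "{x,a} \<notin> (\<lambda>s. {x,s}) ` S" using aS x by (auto simp: doubleton_eq_iff)
  then show "card (Af a S x) = k + 1" unfolding Af_def using x card_image[OF inj2] cS fS by simp
  show "{x,a} \<in> Af a S x" using x unfolding Af_def by simp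
next
  fix x
  have fS: "finite S" using fin SV finite_subset by blast
  then show "finite (Af a S x)" unfolding Af_def by simp
qed

lemma pair_bound:
  fixes V :: "'a set" and p :: real
  assumes fin: "finite V" and aV: "a \<in> V" and SV: "S \<subseteq> V - {a}" and cS: "card S = k"
    and p0: "0 \<le> p" and p1: "p \<le> 1"
  shows "(\<Sum>E\<in>graphs_on V. gnp_weight V p E * ind (is_proper_star_k_separation V E k a S))
          \<le> (1-p)^k * ((p + (1-p)^(k+1))^(card V - k - 1) - ((1-p)^k)^(card V - k - 1))"
    and "(\<Sum>E\<in>graphs_on V. gnp_weight V p E * ind (is_proper_star_k_separation V E k a S))
          \<le> (1-p)^k * ((p + (1-p)^(k+1))^(card V - k - 1) - p^(card V - k - 1))"
proof -
  define Ow where "Ow = V - insert a S"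
  define I where "I = insert a Ow"
  define Y where "Y = all_edges V"
  note AF = Af_facts[OF fin aV SV cS, folded Ow_def, folded I_def, folded Y_def]
  have fY: "finite Y" unfolding Y_def using all_edges_finite[OF fin] .
  have fO: "finite Ow" unfolding Ow_def using fin by simp
  have aO: "a \<notin> Ow" unfolding Ow_def by simp
  have fI: "finite I" unfolding I_def using fO by simp
  have cO: "card Ow = card V - k - 1"
  proof -
    have sub: "insert a S \<subseteq> V" using aV SV by auto
    have fS: "finite S" using SV fin by (meson Diff_subset finite_subset)
    have aS: "a \<notin> S" using SV by blast
    have c1: "card (insert a S) = k + 1" using fS aS cS by simp
    have fi: "finite (insert a S)" using fS by simp
    have "card (V - insert a S) = card V - card (insert a S)" by (rule card_Diff_subset[OF fi sub])
    then show ?thesis unfolding Ow_def c1 by simp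
  qed
  have gw: "\<And>E. gnp_weight V p E = wt Y p E" unfolding gnp_weight_def wt_def Y_def by simp
  have gY: "graphs_on V = Pow Y" unfolding graphs_on_def Y_def by simp
  let ?q = "1 - p" and ?r = "p + (1-p)^(k+1)"
  have muAB: "\<And>x. x \<in> I \<Longrightarrow> (\<Sum>B\<in>Pow (Af a S x). wt (Af a S x) p B * ind (PAB a x B))
      = (if x = a then ?q^k else ?r)"
  proof -
    fix x assume x: "x \<in> I"
    show "(\<Sum>B\<in>Pow (Af a S x). wt (Af a S x) p B * ind (PAB a x B)) = (if x = a then ?q^k else ?r)"
    proof (cases "x = a")
      case True
      then show ?thesis using mu_empty[OF AF(6)[of a], of p] AF(3) unfolding PAB_def by simp
    next
      case False
      then have xO: "x \<in> Ow" using x I_def by simp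
      have "(\<Sum>B\<in>Pow (Af a S x). wt (Af a S x) p B * ind (PAB a x B))
          = (\<Sum>B\<in>Pow (Af a S x). wt (Af a S x) p B * ind ({x,a} \<in> B) + wt (Af a S x) p B * ind (B = {}))"
        using False unfolding PAB_def by (intro sum.cong refl) (auto simp: ind_def)
      also have "\<dots> = p + ?q^(k+1)"
        by (simp add: sum.distrib mu_mem[OF AF(6) AF(5)[OF xO]] mu_empty[OF AF(6)] AF(4)[OF xO])
      finally show ?thesis using False by simp
    qed
  qed
  have muN: "\<And>x. x \<in> I \<Longrightarrow> (\<Sum>B\<in>Pow (Af a S x). wt (Af a S x) p B * ind (PN a x B))
      = ?q^k"
  proof -
    fix x assume x: "x \<in> I"
    show "(\<Sum>B\<in>Pow (Af a S x). wt (Af a S x) p B * ind (PN a x B)) = ?q^k"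
    proof (cases "x = a")
      case True
      then show ?thesis using mu_empty[OF AF(6)[of a], of p] AF(3) unfolding PN_def by simp
    next
      case False
      then have xO: "x \<in> Ow" using x I_def by simp
      have "(\<Sum>B\<in>Pow (Af a S x). wt (Af a S x) p B * ind (PN a x B))
          = (\<Sum>B\<in>Pow (Af a S x). wt (Af a S x) p B * ind (B = {}) + wt (Af a S x) p B * ind (B = {{x,a}}))"
        using False unfolding PN_def by (intro sum.cong refl) (auto simp: ind_def)
      also have "\<dots> = ?q^(k+1) + p * ?q^k"
        by (simp add: sum.distrib mu_single[OF AF(6) AF(5)[OF xO]] mu_empty[OF AF(6)] AF(4)[OF xO])
      also have "\<dots> = ?q^k" by (simp add: algebra_simps)
      finally show ?thesis .
    qed
  qed
  have muA: "\<And>x. x \<in> I \<Longrightarrow> (\<Sum>B\<in>Pow (Af a S x). wt (Af a S x) p B * ind (PA a x B))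
      = (if x = a then ?q^k else p)"
  proof -
    fix x assume x: "x \<in> I"
    show "(\<Sum>B\<in>Pow (Af a S x). wt (Af a S x) p B * ind (PA a x B)) = (if x = a then ?q^k else p)"
    proof (cases "x = a")
      case True
      then show ?thesis using mu_empty[OF AF(6)[of a], of p] AF(3) unfolding PA_def by simp
    next
      case False
      then have xO: "x \<in> Ow" using x I_def by simp
      show ?thesis using False mu_mem[OF AF(6) AF(5)[OF xO]] unfolding PA_def by simp
    qed
  qed
  have EX: "\<And>P. (\<Sum>E\<in>Pow Y. wt Y p E * ind (\<forall>x\<in>I. P x (E \<inter> Af a S x)))
      = (\<Prod>x\<in>I. \<Sum>B\<in>Pow (Af a S x). wt (Af a S x) p B * ind (P x B))"
  proof -
    fix P :: "'a \<Rightarrow> 'a set set \<Rightarrow> bool"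
    have "(\<Sum>E\<in>Pow Y. wt Y p E * ind (\<forall>x\<in>I. P x (E \<inter> Af a S x)))
        = (\<Sum>E\<in>Pow Y. wt Y p E * (\<Prod>x\<in>I. ind (P x (E \<inter> Af a S x))))"
      using prod_ind[OF fI] by simp
    also have "\<dots> = (\<Prod>x\<in>I. \<Sum>B\<in>Pow (Af a S x). wt (Af a S x) p B * ind (P x B))"
      by (rule factorI[OF fI fY AF(1) AF(2)])
    finally show "(\<Sum>E\<in>Pow Y. wt Y p E * ind (\<forall>x\<in>I. P x (E \<inter> Af a S x)))
      = (\<Prod>x\<in>I. \<Sum>B\<in>Pow (Af a S x). wt (Af a S x) p B * ind (P x B))" .
  qed
  have prodI: "\<And>g. (\<Prod>x\<in>I. g x) = g a * (\<Prod>x\<in>Ow. g x)"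
    unfolding I_def using fO aO by simp
  have EAB: "(\<Sum>E\<in>Pow Y. wt Y p E * ind (\<forall>x\<in>I. PAB a x (E \<inter> Af a S x))) = ?q^k * ?r^(card V - k - 1)"
  proof -
    have "(\<Prod>x\<in>Ow. \<Sum>B\<in>Pow (Af a S x). wt (Af a S x) p B * ind (PAB a x B)) = (\<Prod>x\<in>Ow. ?r)"
      using muAB aO unfolding I_def by (intro prod.cong refl) auto
    then show ?thesis unfolding EX prodI using muAB[of a] cO I_def by simp
  qed
  have EN: "(\<Sum>E\<in>Pow Y. wt Y p E * ind (\<forall>x\<in>I. PN a x (E \<inter> Af a S x))) = ?q^k * (?q^k)^(card V - k - 1)"
  proof -
    have "(\<Prod>x\<in>Ow. \<Sum>B\<in>Pow (Af a S x). wt (Af a S x) p B * ind (PN a x B)) = (\<Prod>x\<in>Ow. ?q^k)"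
      using muN unfolding I_def by (intro prod.cong refl) auto
    then show ?thesis unfolding EX prodI using muN[of a] cO I_def by simp
  qed
  have EA: "(\<Sum>E\<in>Pow Y. wt Y p E * ind (\<forall>x\<in>I. PA a x (E \<inter> Af a S x))) = ?q^k * p^(card V - k - 1)"
  proof -
    have "(\<Prod>x\<in>Ow. \<Sum>B\<in>Pow (Af a S x). wt (Af a S x) p B * ind (PA a x B)) = (\<Prod>x\<in>Ow. p)"
      using muA aO unfolding I_def by (intro prod.cong refl) auto
    then show ?thesis unfolding EX prodI using muA[of a] cO I_def by simp
  qed
  have wt0: "\<And>E. wt Y p E \<ge> 0" unfolding wt_def using p0 p1 by simp
  have pt: "\<And>E Q. (\<forall>x\<in>I. \<forall>B. Q x B \<longrightarrow> PAB a x B) \<Longrightarrow>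
       (is_proper_star_k_separation V E k a S \<Longrightarrow> \<not> (\<forall>x\<in>I. Q x (E \<inter> Af a S x))) \<Longrightarrow>
       ind (is_proper_star_k_separation V E k a S) \<le>
       ind (\<forall>x\<in>I. PAB a x (E \<inter> Af a S x)) - ind (\<forall>x\<in>I. Q x (E \<inter> Af a S x))"
  proof -
    fix E Q assume h1: "\<forall>x\<in>I. \<forall>B. Q x B \<longrightarrow> PAB a x B"
      and h2: "is_proper_star_k_separation V E k a S \<Longrightarrow> \<not> (\<forall>x\<in>I. Q x (E \<inter> Af a S x))"
    show "ind (is_proper_star_k_separation V E k a S) \<le>
       ind (\<forall>x\<in>I. PAB a x (E \<inter> Af a S x)) - ind (\<forall>x\<in>I. Q x (E \<inter> Af a S x))"
    proof (rule ind_le_diff)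
      assume P: "is_proper_star_k_separation V E k a S"
      show "(\<forall>x\<in>I. PAB a x (E \<inter> Af a S x)) \<and> \<not> (\<forall>x\<in>I. Q x (E \<inter> Af a S x))"
        using proper_PAB[OF P] h2[OF P] unfolding I_def Ow_def by blast
    next
      assume "\<forall>x\<in>I. Q x (E \<inter> Af a S x)"
      then show "\<forall>x\<in>I. PAB a x (E \<inter> Af a S x)" using h1 by blast
    qed
  qed
  have gen: "\<And>Q c. (\<forall>x\<in>I. \<forall>B. Q x B \<longrightarrow> PAB a x B) \<Longrightarrow>
       (\<And>E. is_proper_star_k_separation V E k a S \<Longrightarrow> \<not> (\<forall>x\<in>I. Q x (E \<inter> Af a S x))) \<Longrightarrow>
       (\<Sum>E\<in>Pow Y. wt Y p E * ind (\<forall>x\<in>I. Q x (E \<inter> Af a S x))) = c \<Longrightarrow>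
       (\<Sum>E\<in>graphs_on V. gnp_weight V p E * ind (is_proper_star_k_separation V E k a S))
         \<le> ?q^k * ?r^(card V - k - 1) - c"
  proof -
    fix Q c assume h1: "\<forall>x\<in>I. \<forall>B. Q x B \<longrightarrow> PAB a x B"
      and h2: "\<And>E. is_proper_star_k_separation V E k a S \<Longrightarrow> \<not> (\<forall>x\<in>I. Q x (E \<inter> Af a S x))"
      and h3: "(\<Sum>E\<in>Pow Y. wt Y p E * ind (\<forall>x\<in>I. Q x (E \<inter> Af a S x))) = c"
    have "(\<Sum>E\<in>graphs_on V. gnp_weight V p E * ind (is_proper_star_k_separation V E k a S))
        = (\<Sum>E\<in>Pow Y. wt Y p E * ind (is_proper_star_k_separation V E k a S))"
      unfolding gY gw ..
    also have "\<dots> \<le> (\<Sum>E\<in>Pow Y. wt Y p E * (ind (\<forall>x\<in>I. PAB a x (E \<inter> Af a S x)) - ind (\<forall>x\<in>I. Q x (E \<inter> Af a S x))))"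
    proof (rule sum_mono)
      fix E assume "E \<in> Pow Y"
      show "wt Y p E * ind (is_proper_star_k_separation V E k a S) \<le> wt Y p E * (ind (\<forall>x\<in>I. PAB a x (E \<inter> Af a S x)) - ind (\<forall>x\<in>I. Q x (E \<inter> Af a S x)))"
        by (rule mult_left_mono[OF pt[OF h1 h2] wt0])
    qed
    also have "\<dots> = ?q^k * ?r^(card V - k - 1) - c"
      using EAB h3 by (simp add: right_diff_distrib sum_subtractf)
    finally show "(\<Sum>E\<in>graphs_on V. gnp_weight V p E * ind (is_proper_star_k_separation V E k a S))
         \<le> ?q^k * ?r^(card V - k - 1) - c" .
  qed
  have "(\<Sum>E\<in>graphs_on V. gnp_weight V p E * ind (is_proper_star_k_separation V E k a S))
         \<le> ?q^k * ?r^(card V - k - 1) - ?q^k * (?q^k)^(card V - k - 1)"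
  proof (rule gen[OF _ _ EN])
    show "\<forall>x\<in>I. \<forall>B. PN a x B \<longrightarrow> PAB a x B" unfolding PN_def PAB_def by auto
    fix E assume P: "is_proper_star_k_separation V E k a S"
    show "\<not> (\<forall>x\<in>I. PN a x (E \<inter> Af a S x))"
      using proper_not_PN[OF P] unfolding I_def Ow_def .
  qed
  then show "(\<Sum>E\<in>graphs_on V. gnp_weight V p E * ind (is_proper_star_k_separation V E k a S))
          \<le> (1-p)^k * ((p + (1-p)^(k+1))^(card V - k - 1) - ((1-p)^k)^(card V - k - 1))"
    by (simp add: right_diff_distrib)
  have "(\<Sum>E\<in>graphs_on V. gnp_weight V p E * ind (is_proper_star_k_separation V E k a S))
         \<le> ?q^k * ?r^(card V - k - 1) - ?q^k * p^(card V - k - 1)"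
  proof (rule gen[OF _ _ EA])
    show "\<forall>x\<in>I. \<forall>B. PA a x B \<longrightarrow> PAB a x B" unfolding PA_def PAB_def by auto
    fix E assume P: "is_proper_star_k_separation V E k a S"
    show "\<not> (\<forall>x\<in>I. PA a x (E \<inter> Af a S x))"
      using proper_not_PA[OF P] unfolding I_def Ow_def .
  qed
  then show "(\<Sum>E\<in>graphs_on V. gnp_weight V p E * ind (is_proper_star_k_separation V E k a S))
          \<le> (1-p)^k * ((p + (1-p)^(k+1))^(card V - k - 1) - p^(card V - k - 1))"
    by (simp add: right_diff_distrib)
qed



theorem lemma3p3:
  fixes V :: "'a set" and n k :: nat and p :: real
  assumes "finite V" and "card V = n" and "0 < k" and "0 \<le> p" and "p \<le> 1"
  shows "gnp_expectation V p (\<lambda>E. real (U V k E))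
           \<le> real n ^ 2 * real ((n - 1) choose k) * (1 - p) ^ (2 * k + 1)
             * (p + (1 - p) ^ (k + 1)) ^ (n - k - 2)
       \<and> gnp_expectation V p (\<lambda>E. real (U V k E))
           \<le> real k * real n ^ 2 * real ((n - 1) choose k) * (1 - p) ^ (k + 1) * p ^ 2
             * (p + (1 - p) ^ (k + 1)) ^ (n - k - 2)"
proof -
  note fin = assms(1) and cV = assms(2) and k0 = assms(3) and p0 = assms(4) and p1 = assms(5)
  define q where "q = 1 - p"
  define r where "r = p + q^(k+1)"
  define m where "m = n - k - 1"
  have q0: "q \<ge> 0" and q1: "q \<le> 1" using p0 p1 q_def by auto
  have r0: "r \<ge> 0" using r_def p0 q0 by simp
  define Cand where "Cand = Sigma V (\<lambda>a. {S. S \<subseteq> V - {a} \<and> card S = k})"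
  have fCand: "finite Cand" unfolding Cand_def using fin by (auto intro: finite_SigmaI)
  have cardCand: "card Cand = n * ((n - 1) choose k)"
  proof -
    have "card Cand = (\<Sum>a\<in>V. card {S. S \<subseteq> V - {a} \<and> card S = k})"
      unfolding Cand_def using fin by (subst card_SigmaI) auto
    also have "\<dots> = (\<Sum>a\<in>V. (n - 1) choose k)"
    proof (rule sum.cong[OF refl])
      fix a assume "a \<in> V"
      then show "card {S. S \<subseteq> V - {a} \<and> card S = k} = (n - 1) choose k"
        using n_subsets[of "V - {a}" k] fin cV by simp
    qed
    finally show ?thesis using cV by simp
  qed
  define f where "f = (\<lambda>c::'a \<times> 'a set. \<Sum>E\<in>graphs_on V. gnp_weight V p E * ind (is_proper_star_k_separation V E k (fst c) (snd c)))"
  have lin: "gnp_expectation V p (\<lambda>E. real (U V k E)) = (\<Sum>c\<in>Cand. f c)"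
  proof -
    have pt: "\<And>E. real (U V k E) = (\<Sum>c\<in>Cand. ind (is_proper_star_k_separation V E k (fst c) (snd c)))"
    proof -
      fix E
      let ?X = "{(a, S). is_proper_star_k_separation V E k a S}"
      have sub: "?X \<subseteq> Cand"
      proof
        fix c assume "c \<in> ?X"
        then obtain a S where c: "c = (a, S)" and P: "is_proper_star_k_separation V E k a S" by blast
        then have "a \<in> V" "S \<subseteq> V - st V E a" "card S = k"
          unfolding is_proper_star_k_separation_def is_star_separation_def by auto
        moreover have "a \<in> st V E a" unfolding st_def by simp
        ultimately show "c \<in> Cand" unfolding Cand_def c by auto
      qed
      have "U V k E = card ?X" unfolding U_def ..
      also have "\<dots> = card (Cand \<inter> ?X)" using sub by (simp add: Int_absorb1)
      finally have "real (U V k E) = (\<Sum>c\<in>Cand \<inter> ?X. 1)" by simp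
      also have "\<dots> = (\<Sum>c\<in>Cand. if c \<in> ?X then 1 else 0)"
        by (rule sum.inter_restrict[OF fCand])
      also have "\<dots> = (\<Sum>c\<in>Cand. ind (is_proper_star_k_separation V E k (fst c) (snd c)))"
        by (intro sum.cong refl) (auto simp: ind_def split: prod.splits)
      finally show "real (U V k E) = (\<Sum>c\<in>Cand. ind (is_proper_star_k_separation V E k (fst c) (snd c)))" .
    qed
    have "gnp_expectation V p (\<lambda>E. real (U V k E))
        = (\<Sum>E\<in>graphs_on V. \<Sum>c\<in>Cand. gnp_weight V p E * ind (is_proper_star_k_separation V E k (fst c) (snd c)))"
      unfolding gnp_expectation_def pt by (simp add: sum_distrib_left)
    also have "\<dots> = (\<Sum>c\<in>Cand. f c)" unfolding f_def by (rule sum.swap)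
    finally show ?thesis .
  qed
  have mdef: "card V - k - 1 = m" using cV m_def by simp
  define b1 where "b1 = q^k * (r^m - p^m)"
  define b2 where "b2 = (if q \<le> p^2 then q^k * (r^m - p^m) else q^k * (r^m - (q^k)^m))"
  have fb: "\<And>c. c \<in> Cand \<Longrightarrow> f c \<le> b1 \<and> f c \<le> b2"
  proof -
    fix c assume "c \<in> Cand"
    then obtain a S where c: "c = (a, S)" and aV: "a \<in> V" and SV: "S \<subseteq> V - {a}" and cS: "card S = k"
      unfolding Cand_def by auto
    note PB = pair_bound[OF fin aV SV cS p0 p1, unfolded mdef, folded q_def, folded r_def]
    show "f c \<le> b1 \<and> f c \<le> b2" using PB unfolding f_def c b1_def b2_def by simp
  qed
  have s1: "gnp_expectation V p (\<lambda>E. real (U V k E)) \<le> real n * real ((n - 1) choose k) * b1"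
  proof -
    have "(\<Sum>c\<in>Cand. f c) \<le> (\<Sum>c\<in>Cand. b1)" using fb by (intro sum_mono) auto
    then show ?thesis using lin cardCand by simp
  qed
  have s2: "gnp_expectation V p (\<lambda>E. real (U V k E)) \<le> real n * real ((n - 1) choose k) * b2"
  proof -
    have "(\<Sum>c\<in>Cand. f c) \<le> (\<Sum>c\<in>Cand. b2)" using fb by (intro sum_mono) auto
    then show ?thesis using lin cardCand by simp
  qed
  have nC0: "real n * real ((n - 1) choose k) \<ge> 0" by simp
  have B1: "b1 \<le> real n * (q^(2*k+1) * r^(n-k-2))"
  proof (cases "m = 0")
    case True
    then show ?thesis unfolding b1_def using q0 r0 by simp
  next
    case False
    then have e: "n - k - 2 = m - 1" and nm: "real m \<le> real n" using m_def by auto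
    have "b1 \<le> q^k * (real m * q^(k+1) * r^(m-1))"
      unfolding b1_def using LB1[OF p0 p1 q_def r_def, of m] q0 by (intro mult_left_mono) auto
    also have "\<dots> = real m * (q^(2*k+1) * r^(m-1))"
    proof -
      have ex: "2*k+1 = k + (k+1)" by simp
      have "q^(2*k+1) = q^k * q^(k+1)" unfolding ex power_add ..
      then show ?thesis by (simp only: mult.assoc mult.left_commute)
    qed
    also have "\<dots> \<le> real n * (q^(2*k+1) * r^(m-1))" using nm q0 r0 by (intro mult_right_mono) auto
    finally show ?thesis using e by simp
  qed
  have B2: "b2 \<le> real n * (real k * q^(k+1) * p^2 * r^(n-k-2))"
  proof (cases "m = 0")
    case True
    then show ?thesis unfolding b2_def using q0 r0 by simp
  next
    case False
    then have e: "n - k - 2 = m - 1" and nm: "real n = real m + real k + 1" using m_def by auto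
    have k1: "k \<ge> 1" using k0 by simp
    have "b2 \<le> real k * (real m + real k + 1) * p^2 * q^(k+1) * r^(m-1)"
      unfolding b2_def using LB2a[OF p0 p1 q_def r_def k1, of m] LB2b[OF p0 p1 q_def r_def k1, of m]
      by (auto simp: not_le)
    then show ?thesis using e nm by (simp add: algebra_simps)
  qed
  have "gnp_expectation V p (\<lambda>E. real (U V k E)) \<le> real n * real ((n - 1) choose k) * (real n * (q^(2*k+1) * r^(n-k-2)))"
    using s1 mult_left_mono[OF B1 nC0] by linarith
  moreover have "gnp_expectation V p (\<lambda>E. real (U V k E)) \<le> real n * real ((n - 1) choose k) * (real n * (real k * q^(k+1) * p^2 * r^(n-k-2)))"
    using s2 mult_left_mono[OF B2 nC0] by linarith
  ultimately show ?thesis unfolding q_def r_def by (simp add: power2_eq_square algebra_simps)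
qed

end
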